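(* Let $v$ satisfy the standing assumptions and the doubling condition, and let $g(x)=v(1-x^{-1})$. Fix $A>1$, set $b_0=1$ and inductively $b_{n+1}=\min\{l\in\mathbb{N}: g(2^l)>A\,g(2^{b_n})\}$. Then $u(z)=\operatorname{Re}\sum_{k=0}^\infty g(2^{b_k})z^{2^{b_k}}$, $z\in\mathbb{D}$, belongs to $h^\infty_v$.
   Context: Standing assumptions: $v:[0,1)\to[1,\infty)$ is positive, increasing, continuous, $v(0)=1$, $\lim_{r\to1}v(r)=+\infty$. Doubling condition: there is $D\ge1$ with $v(1-d)\le D\,v(1-2d)$ for all $d\in(0,1/2]$. $h^\infty_v$ is the set of real harmonic $u$ on $\mathbb{D}$ with $|u(z)|\le Kv(|z|)$ for some $K>0$. *)

theory Defs
  imports "HOL-Analysis.Analysis"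
begin

definition px :: "(complex \<Rightarrow> real) \<Rightarrow> complex \<Rightarrow> real" where
  "px u z = deriv (\<lambda>t::real. u (z + of_real t)) 0"

definition py :: "(complex \<Rightarrow> real) \<Rightarrow> complex \<Rightarrow> real" where
  "py u z = deriv (\<lambda>t::real. u (z + \<i> * of_real t)) 0"

definition harmonic_on :: "complex set \<Rightarrow> (complex \<Rightarrow> real) \<Rightarrow> bool" where
  "harmonic_on S u \<longleftrightarrow> open S \<and>
     u differentiable_on S \<and>
     px u differentiable_on S \<and> py u differentiable_on S \<and>
     continuous_on S (px (px u)) \<and> continuous_on S (py (px u)) \<and>
     continuous_on S (px (py u)) \<and> continuous_on S (py (py u)) \<and>
     (\<forall>z\<in>S. px (px u) z + py (py u) z = 0)"

definition hinf :: "(real \<Rightarrow> real) \<Rightarrow> (complex \<Rightarrow> real) set" where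
  "hinf v = {u. harmonic_on (ball 0 1) u \<and>
                 (\<exists>K>0. \<forall>z\<in>ball 0 1. \<bar>u z\<bar> \<le> K * v (norm z))}"

definition gfun :: "(real \<Rightarrow> real) \<Rightarrow> real \<Rightarrow> real" where
  "gfun v x = v (1 - inverse x)"

fun bseq :: "(real \<Rightarrow> real) \<Rightarrow> real \<Rightarrow> nat \<Rightarrow> nat" where
  "bseq v A 0 = 1"
| "bseq v A (Suc n) = (LEAST l::nat. gfun v (2 ^ l) > A * gfun v (2 ^ bseq v A n))"

end

theory Submission
  imports Defs
begin


lemma dirderiv:
  fixes G :: "complex \<Rightarrow> complex" and g :: "complex \<Rightarrow> real"
  assumes S: "open S" "z \<in> S" and eq: "\<And>y. y \<in> S \<Longrightarrow> g y = Re (G y)"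
    and d: "(G has_field_derivative d) (at z)"
  shows "((\<lambda>t::real. g (z + of_real t * w)) has_real_derivative Re (w * d)) (at 0)"
proof -
  have h1: "((\<lambda>t::real. z + of_real t * w) has_derivative (\<lambda>t. of_real t * w)) (at 0)"
    by (auto intro!: derivative_eq_intros)
  have h2: "(G has_derivative (\<lambda>h. h * d)) (at ((\<lambda>t::real. z + of_real t * w) 0))"
  proof -
    have e: "(\<lambda>h. h * d) = (*) d" by (auto simp: fun_eq_iff)
    show ?thesis using d by (simp add: has_field_derivative_def e)
  qed
  have "((\<lambda>t::real. G (z + of_real t * w)) has_derivative (\<lambda>t. of_real t * w * d)) (at 0)"
    using has_derivative_compose[OF h1 h2] by simp
  then have "((\<lambda>t::real. Re (G (z + of_real t * w))) has_derivative (\<lambda>t. Re (of_real t * w * d))) (at 0)"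
    by (rule has_derivative_Re)
  moreover have "(\<lambda>t. Re (of_real t * w * d)) = (*) (Re (w * d))"
    by (auto simp: fun_eq_iff mult.assoc)
  ultimately have h3: "((\<lambda>t::real. Re (G (z + of_real t * w))) has_real_derivative Re (w * d)) (at 0)"
    by (simp add: has_field_derivative_def)
  have op: "open ((\<lambda>t::real. z + of_real t * w) -` S)"
    by (rule continuous_open_vimage[OF S(1)]) (auto intro!: continuous_intros)
  show ?thesis
    by (rule has_field_derivative_transform_within_open[OF h3 op]) (use S eq in auto)
qed

lemma dirderiv_eq:
  fixes G :: "complex \<Rightarrow> complex" and g :: "complex \<Rightarrow> real"
  assumes "open S" "z \<in> S" "\<And>y. y \<in> S \<Longrightarrow> g y = Re (G y)"
    and "(G has_field_derivative d) (at z)"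
  shows "px g z = Re d" "py g z = Re (\<i> * d)"
proof -
  show "px g z = Re d" unfolding px_def
    using DERIV_imp_deriv[OF dirderiv[OF assms, of 1]] by simp
  show "py g z = Re (\<i> * d)" unfolding py_def
    using DERIV_imp_deriv[OF dirderiv[OF assms, of \<i>]] by (simp add: mult.commute)
qed

lemma re_differentiable:
  fixes G :: "complex \<Rightarrow> complex" and g :: "complex \<Rightarrow> real"
  assumes S: "open S" "z \<in> S" and eq: "\<And>y. y \<in> S \<Longrightarrow> g y = Re (G y)"
    and d: "(G has_field_derivative d) (at z)"
  shows "g differentiable (at z)"
proof -
  have "(G has_derivative (\<lambda>h. d * h)) (at z)" using d by (simp add: has_field_derivative_def)
  then have "((\<lambda>y. Re (G y)) has_derivative (\<lambda>h. Re (d * h))) (at z)" by (rule has_derivative_Re)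
  then have "(g has_derivative (\<lambda>h. Re (d * h))) (at z)"
    by (rule has_derivative_transform_within_open[OF _ S]) (use eq in auto)
  then show ?thesis by (auto simp: differentiable_def)
qed

lemma harmonic_Re:
  fixes F F1 F2 F3 :: "complex \<Rightarrow> complex"
  assumes S: "open S"
    and d1: "\<And>z. z \<in> S \<Longrightarrow> (F has_field_derivative F1 z) (at z)"
    and d2: "\<And>z. z \<in> S \<Longrightarrow> (F1 has_field_derivative F2 z) (at z)"
    and d3: "\<And>z. z \<in> S \<Longrightarrow> (F2 has_field_derivative F3 z) (at z)"
  shows "harmonic_on S (\<lambda>z. Re (F z))"
proof -
  define u where "u = (\<lambda>z. Re (F z))"
  have pxu: "\<And>z. z \<in> S \<Longrightarrow> px u z = Re (F1 z)"
    using dirderiv_eq(1)[OF S _ _ d1] u_def by auto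
  have pyu: "\<And>z. z \<in> S \<Longrightarrow> py u z = Re (\<i> * F1 z)"
    using dirderiv_eq(2)[OF S _ _ d1] u_def by auto
  have d1': "\<And>z. z \<in> S \<Longrightarrow> ((\<lambda>y. \<i> * F1 y) has_field_derivative \<i> * F2 z) (at z)"
    using d2 by (auto intro!: derivative_eq_intros)
  have pxx: "\<And>z. z \<in> S \<Longrightarrow> px (px u) z = Re (F2 z)"
    using dirderiv_eq(1)[OF S _ pxu d2] by auto
  have pyx: "\<And>z. z \<in> S \<Longrightarrow> py (px u) z = Re (\<i> * F2 z)"
    using dirderiv_eq(2)[OF S _ pxu d2] by auto
  have pxy: "\<And>z. z \<in> S \<Longrightarrow> px (py u) z = Re (\<i> * F2 z)"
    using dirderiv_eq(1)[OF S _ pyu d1'] by auto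
  have pyy: "\<And>z. z \<in> S \<Longrightarrow> py (py u) z = Re (\<i> * (\<i> * F2 z))"
    using dirderiv_eq(2)[OF S _ pyu d1'] by auto
  have cF2: "continuous_on S F2"
    using d3 by (meson DERIV_continuous continuous_at_imp_continuous_on)
  have c1: "continuous_on S (\<lambda>z. Re (F2 z))" "continuous_on S (\<lambda>z. Re (\<i> * F2 z))"
    "continuous_on S (\<lambda>z. Re (\<i> * (\<i> * F2 z)))"
    by (auto intro!: continuous_intros cF2)
  have "u differentiable_on S"
    by (rule differentiable_at_imp_differentiable_on) (use re_differentiable[OF S _ _ d1] u_def in auto)
  moreover have "px u differentiable_on S"
    by (rule differentiable_at_imp_differentiable_on) (use re_differentiable[OF S _ pxu d2] in auto)
  moreover have "py u differentiable_on S"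
    by (rule differentiable_at_imp_differentiable_on) (use re_differentiable[OF S _ pyu d1'] in auto)
  moreover have "continuous_on S (px (px u))" using c1 pxx by (subst continuous_on_cong[OF refl pxx]) auto
  moreover have "continuous_on S (py (px u))" using c1 pyx by (subst continuous_on_cong[OF refl pyx]) auto
  moreover have "continuous_on S (px (py u))" using c1 pxy by (subst continuous_on_cong[OF refl pxy]) auto
  moreover have "continuous_on S (py (py u))" using c1 pyy by (subst continuous_on_cong[OF refl pyy]) auto
  moreover have "\<forall>z\<in>S. px (px u) z + py (py u) z = 0" using pxx pyy by simp
  ultimately show ?thesis using S unfolding harmonic_on_def u_def by blast
qed



locale L =
  fixes v :: "real \<Rightarrow> real" and A D :: real
  assumes v_ge1: "\<forall>r\<in>{0..<1}. v r \<ge> 1"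
    and v_mono: "mono_on {0..<1} v"
    and v_0: "v 0 = 1"
    and v_lim: "filterlim v at_top (at_left 1)"
    and D1: "D \<ge> 1" and D2: "\<forall>d\<in>{0<..1/2}. v (1 - d) \<le> D * v (1 - 2 * d)"
    and A: "A > 1"
begin

definition "b k = bseq v A k"
definition "c k = gfun v (2 ^ b k)"
definition "t k = 1 - inverse ((2::real) ^ b k)"
definition "N k = (2::nat) ^ b k"

lemma pt_in: "1 - inverse ((2::real) ^ l) \<in> {0..<1}"
proof -
  have "inverse ((2::real) ^ l) \<le> 1" by (simp add: inverse_le_1_iff)
  moreover have "inverse ((2::real) ^ l) > 0" by simp
  ultimately show ?thesis by auto
qed

lemma g_ge1: "gfun v (2 ^ l) \<ge> 1"
  using v_ge1 pt_in[of l] by (simp add: gfun_def)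

lemma g_mono: "l \<le> l' \<Longrightarrow> gfun v (2 ^ l) \<le> gfun v (2 ^ l')"
  unfolding gfun_def
proof (rule mono_onD[OF v_mono pt_in pt_in])
  assume "l \<le> l'"
  then have "(2::real) ^ l \<le> 2 ^ l'" by (simp add: power_increasing)
  then show "1 - inverse ((2::real) ^ l) \<le> 1 - inverse (2 ^ l')"
    by (simp add: le_imp_inverse_le)
qed

lemma g_double: "gfun v (2 ^ Suc l) \<le> D * gfun v (2 ^ l)"
proof -
  define d where "d = inverse ((2::real) ^ Suc l)"
  have "d \<in> {0<..1/2}" unfolding d_def
    by (auto simp: field_simps)
  then have "v (1 - d) \<le> D * v (1 - 2 * d)" using D2 by blast
  moreover have "2 * d = inverse ((2::real) ^ l)" unfolding d_def by (simp add: field_simps)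
  ultimately show ?thesis unfolding gfun_def d_def by simp
qed

lemma g_unbounded: "\<exists>l. gfun v (2 ^ l) > M"
proof -
  have "eventually (\<lambda>x. M + 1 \<le> v x) (at_left 1)"
    using v_lim by (simp add: filterlim_at_top)
  moreover have "eventually (\<lambda>x. x \<in> {0<..<1::real}) (at_left 1)"
    by (rule eventually_at_left_real) simp
  ultimately have "eventually (\<lambda>x. M + 1 \<le> v x \<and> x \<in> {0<..<1::real}) (at_left 1)"
    by (rule eventually_conj)
  then obtain e where e: "e < 1" "\<And>y. e < y \<Longrightarrow> y < 1 \<Longrightarrow> M + 1 \<le> v y"
    by (auto simp: eventually_at_left_field)
  obtain l where l: "(1/2::real) ^ l < 1 - e"
    using real_arch_pow_inv[of "1 - e" "1/2"] e by auto
  have "e < 1 - inverse ((2::real) ^ l)" using l by (simp add: power_one_over field_simps)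
  then have "M + 1 \<le> gfun v (2 ^ l)" unfolding gfun_def by (intro e(2)) auto
  then show ?thesis by (intro exI[of _ l]) simp
qed

lemma c_ge1: "c k \<ge> 1" unfolding c_def by (rule g_ge1)

lemma c_nonneg: "c k \<ge> 0" using c_ge1[of k] by simp

lemma b_Suc: "b (Suc k) = (LEAST l. gfun v (2 ^ l) > A * c k)"
  by (simp add: b_def c_def)

lemma c_Suc: "c (Suc k) > A * c k"
proof -
  obtain l where "gfun v (2 ^ l) > A * c k" using g_unbounded by blast
  then show ?thesis unfolding c_def[of "Suc k"] b_Suc by (rule LeastI)
qed

lemma b_less: "b k < b (Suc k)"
proof (rule ccontr)
  assume "\<not> b k < b (Suc k)"
  then have "c (Suc k) \<le> c k" unfolding c_def by (intro g_mono) simp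
  moreover have "A * c k \<ge> c k" using A c_ge1[of k] by simp
  ultimately show False using c_Suc[of k] by simp
qed

lemma c_Suc_le: "c (Suc k) \<le> D * A * c k"
proof -
  obtain l where l: "b (Suc k) = Suc l" using b_less[of k] by (cases "b (Suc k)") auto
  have "\<not> gfun v (2 ^ l) > A * c k"
  proof
    assume "gfun v (2 ^ l) > A * c k"
    then have "b (Suc k) \<le> l" unfolding b_Suc by (rule Least_le)
    then show False using l by simp
  qed
  then have "gfun v (2 ^ l) \<le> A * c k" by simp
  then have "D * gfun v (2 ^ l) \<le> D * (A * c k)" using D1 by (intro mult_left_mono) auto
  then show ?thesis using g_double[of l] l unfolding c_def by simp
qed

lemma b_add: "b j + i \<le> b (j + i)"
proof (induction i)
  case (Suc i) then show ?case using b_less[of "j + i"] by simp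
qed simp

lemma c_pow: "c (j + i) \<le> (D * A) ^ i * c j"
proof (induction i)
  case (Suc i)
  have "c (j + Suc i) \<le> D * A * c (j + i)" using c_Suc_le[of "j + i"] by simp
  also have "\<dots> \<le> D * A * ((D * A) ^ i * c j)" using Suc D1 A by (intro mult_left_mono) auto
  finally show ?case by (simp add: mult.assoc)
qed simp

lemma sum_le: "(\<Sum>k\<le>m. c k) \<le> A / (A - 1) * c m"
proof (induction m)
  case 0 then show ?case using A c_ge1[of 0] by (simp add: field_simps)
next
  case (Suc m)
  have "c m \<le> c (Suc m) / A" using c_Suc[of m] A by (simp add: field_simps)
  then have "A / (A - 1) * c m \<le> A / (A - 1) * (c (Suc m) / A)" using A by (intro mult_left_mono) auto
  then have "(\<Sum>k\<le>Suc m. c k) \<le> A / (A - 1) * (c (Suc m) / A) + c (Suc m)" using Suc by simp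
  also have "\<dots> = A / (A - 1) * c (Suc m)" using A by (simp add: field_simps)
  finally show ?case .
qed

lemma pow_bound:
  assumes r: "0 \<le> r" "r \<le> t j"
  shows "r ^ N (j + i) \<le> exp (- (2 ^ i))"
proof -
  define x where "x = inverse ((2::real) ^ b j)"
  have tj: "t j = 1 - x" "0 \<le> t j" unfolding t_def x_def using pt_in[of "b j"] by auto
  have "r ^ N (j + i) \<le> t j ^ N (j + i)" using r by (intro power_mono) auto
  also have "\<dots> \<le> exp (- x) ^ N (j + i)"
    using tj exp_ge_add_one_self[of "-x"] by (intro power_mono) auto
  also have "\<dots> = exp (- (x * real (N (j + i))))"
    by (subst exp_of_nat_mult[symmetric]) (simp add: mult.commute)
  also have "\<dots> \<le> exp (- (2 ^ i))"
  proof -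
    have le: "b j \<le> b (j + i)" "i \<le> b (j + i) - b j" using b_add[of j i] by auto
    have "real (N (j + i)) = 2 ^ b j * 2 ^ (b (j + i) - b j)"
      unfolding N_def using le by (simp add: power_add[symmetric])
    then have "x * real (N (j + i)) = 2 ^ (b (j + i) - b j)" unfolding x_def by simp
    moreover have "(2::real) ^ i \<le> 2 ^ (b (j + i) - b j)" using le by (intro power_increasing) auto
    ultimately show ?thesis by simp
  qed
  finally show ?thesis .
qed

definition "S = (\<Sum>i. (D * A) ^ i * exp (- (2 ^ i)))"

lemma S_summable: "summable (\<lambda>i. (D * A) ^ i * exp (- (2 ^ i)))"
proof (rule summable_ratio_test[where c="1/2" and N="nat \<lceil>ln (2 * D * A)\<rceil>"])
  fix n assume n: "nat \<lceil>ln (2 * D * A)\<rceil> \<le> n"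
  have DA: "D * A > 0" using D1 A by simp
  have "ln (2 * D * A) \<le> real n" using n by linarith
  also have "real n \<le> 2 ^ n"
    using less_exp[of n] by (metis of_nat_le_iff of_nat_numeral of_nat_power less_imp_le)
  finally have "exp (- (2 ^ n)) \<le> exp (- ln (2 * D * A))" by simp
  also have "\<dots> = 1 / (2 * D * A)"
  proof -
    have "2 * D * A > 0" "A * D > 0" using DA by (auto simp: mult.commute)
    then show ?thesis by (simp add: exp_minus inverse_eq_divide)
  qed
  finally have e: "D * A * exp (- (2 ^ n)) \<le> 1/2" using DA by (simp add: field_simps)
  have "exp (- (2 ^ Suc n)) = exp (- (2 ^ n)) * exp (- ((2::real) ^ n))"
    by (simp add: exp_add[symmetric])
  then have "(D * A) ^ Suc n * exp (- (2 ^ Suc n)) = (D * A * exp (- (2 ^ n))) * ((D * A) ^ n * exp (- (2 ^ n)))"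
    by (simp add: algebra_simps)
  also have "\<dots> \<le> 1/2 * ((D * A) ^ n * exp (- (2 ^ n)))"
    using e DA by (intro mult_right_mono) auto
  finally show "norm ((D * A) ^ Suc n * exp (- (2 ^ Suc n))) \<le> 1/2 * norm ((D * A) ^ n * exp (- (2 ^ n)))"
    using DA by simp
qed simp

lemma S_nonneg: "S \<ge> 0"
  unfolding S_def using D1 A by (intro suminf_nonneg S_summable) auto

lemma tail:
  assumes r: "0 \<le> r" "r \<le> t j"
  shows "(\<Sum>i<M. c (j + i) * r ^ N (j + i)) \<le> c j * S"
proof -
  have "(\<Sum>i<M. c (j + i) * r ^ N (j + i)) \<le> (\<Sum>i<M. c j * ((D * A) ^ i * exp (- (2 ^ i))))"
  proof (rule sum_mono)
    fix i
    have "c (j + i) * r ^ N (j + i) \<le> ((D * A) ^ i * c j) * exp (- (2 ^ i))"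
      using c_pow[of j i] pow_bound[OF r, of i] c_ge1[of "j+i"] r
      by (intro mult_mono) auto
    then show "c (j + i) * r ^ N (j + i) \<le> c j * ((D * A) ^ i * exp (- (2 ^ i)))" by (simp add: algebra_simps)
  qed
  also have "\<dots> = c j * (\<Sum>i<M. (D * A) ^ i * exp (- (2 ^ i)))" by (simp add: sum_distrib_left)
  also have "\<dots> \<le> c j * S" unfolding S_def using c_ge1[of j] D1 A
    by (intro mult_left_mono sum_le_suminf S_summable) auto
  finally show ?thesis .
qed

lemma sum_shift:
  fixes f :: "nat \<Rightarrow> real" and j n :: nat
  shows "(\<Sum>k<j + n. f k) = (\<Sum>k<j. f k) + (\<Sum>i<n. f (j + i))"
  by (induction n) (auto simp: add.assoc)

definition "B = A / (A - 1) + D * A * S + D * S"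

lemma c0: "c 0 \<le> D"
  using g_double[of 0] v_0 by (simp add: c_def b_def gfun_def)

lemma t_lim: "\<exists>k. r < t k" if "r < 1"
proof -
  have "\<exists>k. (1/2::real) ^ k < 1 - r" using real_arch_pow_inv[of "1 - r" "1/2"] that by simp
  then obtain k where k: "(1/2::real) ^ k < 1 - r" by blast
  have "k \<le> b k" using b_add[of 0 k] by simp
  then have "inverse ((2::real) ^ b k) \<le> inverse (2 ^ k)"
    by (intro le_imp_inverse_le power_increasing) auto
  then have "inverse ((2::real) ^ b k) \<le> (1/2) ^ k"
    by (simp add: power_one_over inverse_eq_divide)
  then show ?thesis using k by (intro exI[of _ k]) (simp add: t_def)
qed

lemma partial:
  assumes r: "0 \<le> r" "r < 1"
  shows "(\<Sum>k<n. c k * r ^ N k) \<le> B * v r"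
proof -
  have vr: "v r \<ge> 1" using v_ge1 r by auto
  have nn: "\<And>k. 0 \<le> c k * r ^ N k" using c_nonneg r by simp
  have SS: "S \<ge> 0" by (rule S_nonneg)
  have DA: "D * A \<ge> 0" "A / (A - 1) \<ge> 0" using D1 A by auto
  show ?thesis
  proof (cases "r < t 0")
    case True
    have "(\<Sum>k<n. c k * r ^ N k) = (\<Sum>i<n. c (0 + i) * r ^ N (0 + i))" by simp
    also have "\<dots> \<le> c 0 * S" using True r by (intro tail) auto
    also have "\<dots> \<le> D * S" using c0 SS by (intro mult_right_mono) auto
    also have "\<dots> \<le> D * S * v r" using mult_left_mono[OF vr, of "D*S"] D1 SS by simp
    also have "\<dots> \<le> B * v r" unfolding B_def using vr DA SS
      by (intro mult_right_mono) (auto intro!: add_nonneg_nonneg mult_nonneg_nonneg)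
    finally show ?thesis .
  next
    case False
    define p where "p = (LEAST k. r < t k)"
    have rp: "r < t p" unfolding p_def using t_lim[OF r(2)] by (metis LeastI)
    have p0: "p \<noteq> 0" using rp False by (metis)
    then obtain m where m: "p = Suc m" by (cases p) auto
    have tm: "t m \<le> r" using not_less_Least[of m "\<lambda>k. r < t k"] m unfolding p_def by auto
    have cm: "c m \<le> v r" unfolding c_def gfun_def using tm pt_in[of "b m"] r
      by (intro mono_onD[OF v_mono]) (auto simp: t_def)
    have "(\<Sum>k<n. c k * r ^ N k) \<le> (\<Sum>k<Suc m + n. c k * r ^ N k)"
      using nn by (intro sum_mono2) auto
    also have "\<dots> = (\<Sum>k<Suc m. c k * r ^ N k) + (\<Sum>i<n. c (Suc m + i) * r ^ N (Suc m + i))"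
      by (rule sum_shift)
    also have "(\<Sum>k<Suc m. c k * r ^ N k) \<le> (\<Sum>k\<le>m. c k)"
      unfolding lessThan_Suc_atMost
      using r c_nonneg by (intro sum_mono) (auto intro!: mult_left_le power_le_one)
    also have "\<dots> \<le> A / (A - 1) * v r" using sum_le[of m] cm DA by (meson mult_left_mono order_trans)
    also have "(\<Sum>i<n. c (Suc m + i) * r ^ N (Suc m + i)) \<le> c (Suc m) * S"
      using rp m r by (intro tail) auto
    also have "\<dots> \<le> D * A * c m * S" using c_Suc_le[of m] SS by (intro mult_right_mono) auto
    also have "\<dots> \<le> D * A * v r * S" using cm SS DA by (intro mult_right_mono mult_left_mono) auto
    finally have "(\<Sum>k<n. c k * r ^ N k) \<le> (A / (A - 1) + D * A * S) * v r"
      by (simp add: algebra_simps)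
    also have "\<dots> \<le> B * v r" unfolding B_def using vr DA SS D1
      by (intro mult_right_mono) auto
    finally show ?thesis .
  qed
qed

lemma summ: "0 \<le> r \<Longrightarrow> r < 1 \<Longrightarrow> summable (\<lambda>k. c k * r ^ N k)"
  by (rule summableI_nonneg_bounded[OF _ partial]) (use c_nonneg in auto)

lemma suminf_bound: "0 \<le> r \<Longrightarrow> r < 1 \<Longrightarrow> (\<Sum>k. c k * r ^ N k) \<le> B * v r"
  by (rule suminf_le_const[OF summ partial])


lemma N_mono: "strict_mono N"
  unfolding strict_mono_Suc_iff N_def using b_less by (simp add: power_strict_increasing)

definition "ca n = (if n \<in> range N then complex_of_real (c (inv N n)) else 0)"

lemma ca_N: "ca (N k) = complex_of_real (c k)"
  unfolding ca_def using strict_mono_imp_inj_on[OF N_mono] by (simp add: inv_f_f)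

definition "F z = (\<Sum>k. complex_of_real (c k) * z ^ N k)"

lemma summ_c: "norm z < 1 \<Longrightarrow> summable (\<lambda>k. complex_of_real (c k) * z ^ N k)"
  by (rule summable_norm_cancel) (use summ[of "norm z"] c_nonneg in \<open>simp_all add: norm_mult norm_power\<close>)

lemma ca_zero: "n \<notin> range N \<Longrightarrow> ca n * z ^ n = 0"
  by (simp add: ca_def)

lemma sm0: "norm z < 1 \<Longrightarrow> summable (\<lambda>n. ca n * z ^ n)"
  using summable_mono_reindex[OF N_mono, of "\<lambda>n. ca n * z ^ n", OF ca_zero] summ_c[of z]
  by (simp add: ca_N)

lemma Feq: "norm z < 1 \<Longrightarrow> F z = (\<Sum>n. ca n * z ^ n)"
proof -
  assume z: "norm z < 1"
  have "(\<lambda>k. ca (N k) * z ^ N k) sums F z" unfolding F_def ca_N using summ_c[OF z] by (simp add: summable_sums)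
  then have "(\<lambda>n. ca n * z ^ n) sums F z"
    using sums_mono_reindex[OF N_mono, of "\<lambda>n. ca n * z ^ n", OF ca_zero] by simp
  then show ?thesis by (simp add: sums_iff)
qed

lemma F_bound: "norm z < 1 \<Longrightarrow> \<bar>Re (F z)\<bar> \<le> B * v (norm z)"
proof -
  assume z: "norm z < 1"
  have nrm: "(\<lambda>k. norm (complex_of_real (c k) * z ^ N k)) = (\<lambda>k. c k * norm z ^ N k)"
    using c_nonneg by (simp add: norm_mult norm_power)
  have "\<bar>Re (F z)\<bar> \<le> norm (F z)" by (rule abs_Re_le_cmod)
  also have "\<dots> \<le> (\<Sum>k. c k * norm z ^ N k)"
    unfolding F_def using summable_norm[of "\<lambda>k. complex_of_real (c k) * z ^ N k"] summ[of "norm z"] z nrm by simp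
  also have "\<dots> \<le> B * v (norm z)" using suminf_bound[of "norm z"] z by simp
  finally show ?thesis .
qed

lemma F_harm: "harmonic_on (ball 0 1) (\<lambda>z. Re (F z))"
proof -
  define P1 where "P1 z = (\<Sum>n. diffs ca n * z ^ n)" for z
  define P2 where "P2 z = (\<Sum>n. diffs (diffs ca) n * z ^ n)" for z
  define P3 where "P3 z = (\<Sum>n. diffs (diffs (diffs ca)) n * z ^ n)" for z
  have sm1: "\<And>z::complex. norm z < 1 \<Longrightarrow> summable (\<lambda>n. diffs ca n * z ^ n)"
    by (rule termdiff_converges[OF _ sm0])
  have sm2: "\<And>z::complex. norm z < 1 \<Longrightarrow> summable (\<lambda>n. diffs (diffs ca) n * z ^ n)"
    by (rule termdiff_converges[OF _ sm1])
  have d0: "((\<lambda>z. \<Sum>n. ca n * z ^ n) has_field_derivative P1 z) (at z)" if "z \<in> ball 0 1" for z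
    unfolding P1_def by (rule termdiffs_strong'[OF sm0]) (use that in auto)
  have d1: "(P1 has_field_derivative P2 z) (at z)" if "z \<in> ball 0 1" for z
    unfolding P1_def P2_def by (rule termdiffs_strong'[OF sm1]) (use that in auto)
  have d2: "(P2 has_field_derivative P3 z) (at z)" if "z \<in> ball 0 1" for z
    unfolding P2_def P3_def by (rule termdiffs_strong'[OF sm2]) (use that in auto)
  have dF: "(F has_field_derivative P1 z) (at z)" if "z \<in> ball 0 1" for z
    by (rule has_field_derivative_transform_within_open[OF d0[OF that] open_ball that])
      (use Feq in auto)
  show ?thesis by (rule harmonic_Re[OF open_ball dF d1 d2])
qed

lemma B_pos: "B > 0"
proof -
  have "A / (A - 1) > 0" using A by simp
  moreover have "D * A * S \<ge> 0" "D * S \<ge> 0" using D1 A S_nonneg by auto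
  ultimately show ?thesis unfolding B_def by linarith
qed

lemma main: "(\<lambda>z. Re (F z)) \<in> hinf v"
  unfolding hinf_def using F_harm F_bound B_pos by auto


end

theorem lemma8:
  fixes v :: "real \<Rightarrow> real" and A D :: real
  assumes v_ge1: "\<forall>r\<in>{0..<1}. v r \<ge> 1"
    and v_mono: "mono_on {0..<1} v"
    and v_cont: "continuous_on {0..<1} v"
    and v_0: "v 0 = 1"
    and v_lim: "filterlim v at_top (at_left 1)"
    and D: "D \<ge> 1" "\<forall>d\<in>{0<..1/2}. v (1 - d) \<le> D * v (1 - 2 * d)"
    and A: "A > 1"
  shows "(\<lambda>z. Re (\<Sum>k. complex_of_real (gfun v (2 ^ bseq v A k)) * z ^ (2 ^ bseq v A k)))
           \<in> hinf v"
proof -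
  interpret L v A D using assms by unfold_locales auto
  have "(\<lambda>z. Re (\<Sum>k. complex_of_real (gfun v (2 ^ bseq v A k)) * z ^ (2 ^ bseq v A k))) = (\<lambda>z. Re (F z))"
    by (simp add: F_def c_def N_def b_def)
  then show ?thesis using main by simp
qed
end
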